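(* Let $\mathbb H$ be the real quaternion algebra and $f(z)=z^n+a_{n-1}z^{n-1}+\dots+a_1z+a_0$ with $a_0,\dots,a_{n-1}\in\mathbb H$, $a_0\neq0$, evaluated as $f(z_0)=z_0^n+a_{n-1}z_0^{n-1}+\dots+a_0$. Set $a_n=1$ and define polynomials in commuting real-central variables $r,N$ with quaternion coefficients $$g(r,N)=\sum_{k=1}^n a_k\sum_{m=0}^{\lfloor (k-1)/2\rfloor}\binom{k}{2m+1}(-1)^mN^mr^{k-2m-1},\qquad h(r,N)=a_0+\sum_{k=1}^n a_k\sum_{m=0}^{\lfloor k/2\rfloor}\binom{k}{2m}(-1)^mN^mr^{k-2m}.$$ For $z_0\in\mathbb H$ let $r_0=\Re(z_0)$, $x_0=\Im(z_0)$, $N_0=-x_0^2$. Then $z_0$ is a root of $f$ if and only if one of the following holds: (1) $g(r_0,N_0)=h(r_0,N_0)=0$; or (2) $(r_0,N_0)$ satisfies $-g(r,N)\overline{g(r,N)}g(r,N)N=h(r,N)\overline{g(r,N)}h(r,N)$ and $x_0=-g(r_0,N_0)^{-1}h(r_0,N_0)$.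
   Context: For $q=c_1+c_2i+c_3j+c_4k\in\mathbb H$: $\Re(q)=c_1$, $\Im(q)=q-\Re(q)$, $\bar q=\Re(q)-\Im(q)$. For a polynomial $p(r,N)$ with quaternion coefficients, $\overline{p(r,N)}$ is obtained by conjugating the coefficients. With these $g,h$ one has $f(z_0)=g(r_0,N_0)x_0+h(r_0,N_0)$. *)

theory Defs
  imports Complex_Main
begin

datatype quat = Quat (qRe: real) (qI: real) (qJ: real) (qK: real)

lemma quat_eqI: "qRe x = qRe y \<Longrightarrow> qI x = qI y \<Longrightarrow> qJ x = qJ y \<Longrightarrow> qK x = qK y \<Longrightarrow> x = y"
  by (cases x; cases y) simp

instantiation quat :: "{ab_group_add, one, times, inverse, real_vector}"
begin
definition "0 = Quat 0 0 0 0"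
definition "1 = Quat 1 0 0 0"
definition "x + y = Quat (qRe x + qRe y) (qI x + qI y) (qJ x + qJ y) (qK x + qK y)"
definition "- x = Quat (- qRe x) (- qI x) (- qJ x) (- qK x)"
definition "x - y = Quat (qRe x - qRe y) (qI x - qI y) (qJ x - qJ y) (qK x - qK y)"
definition "scaleR c x = Quat (c * qRe x) (c * qI x) (c * qJ x) (c * qK x)"
definition "x * y = Quat
   (qRe x * qRe y - qI x * qI y - qJ x * qJ y - qK x * qK y)
   (qRe x * qI y + qI x * qRe y + qJ x * qK y - qK x * qJ y)
   (qRe x * qJ y - qI x * qK y + qJ x * qRe y + qK x * qI y)
   (qRe x * qK y + qI x * qJ y - qJ x * qI y + qK x * qRe y)"
definition "inverse x = (let d = (qRe x)\<^sup>2 + (qI x)\<^sup>2 + (qJ x)\<^sup>2 + (qK x)\<^sup>2 in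
   Quat (qRe x / d) (- qI x / d) (- qJ x / d) (- qK x / d))"
definition "x div (y::quat) = x * inverse y"
instance
  by standard (auto intro!: quat_eqI simp: zero_quat_def plus_quat_def uminus_quat_def
      minus_quat_def scaleR_quat_def algebra_simps)
end

instance quat :: real_algebra_1
  by standard (auto intro!: quat_eqI simp: zero_quat_def one_quat_def plus_quat_def
      times_quat_def scaleR_quat_def algebra_simps)

definition qcnj :: "quat \<Rightarrow> quat" where
  "qcnj q = Quat (qRe q) (- qI q) (- qJ q) (- qK q)"

definition qIm :: "quat \<Rightarrow> quat" where
  "qIm q = q - of_real (qRe q)"

definition fpoly :: "(nat \<Rightarrow> quat) \<Rightarrow> nat \<Rightarrow> quat \<Rightarrow> quat" where
  "fpoly a n z = z ^ n + (\<Sum>k<n. a k * z ^ k)"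

definition coeffs1 :: "(nat \<Rightarrow> quat) \<Rightarrow> nat \<Rightarrow> nat \<Rightarrow> quat" where
  "coeffs1 a n k = (if k = n then 1 else a k)"

text \<open>g(r,N) and h(r,N) with coefficient sequence c, evaluated at (real-valued, central) r, N.\<close>
definition gpoly :: "(nat \<Rightarrow> quat) \<Rightarrow> nat \<Rightarrow> quat \<Rightarrow> quat \<Rightarrow> quat" where
  "gpoly c n r N = (\<Sum>k=1..n. c k * (\<Sum>m=0..(k - 1) div 2.
      of_nat (k choose (2*m+1)) * (-1) ^ m * N ^ m * r ^ (k - 2*m - 1)))"

definition hpoly :: "(nat \<Rightarrow> quat) \<Rightarrow> nat \<Rightarrow> quat \<Rightarrow> quat \<Rightarrow> quat" where
  "hpoly c n r N = c 0 + (\<Sum>k=1..n. c k * (\<Sum>m=0..k div 2.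
      of_nat (k choose (2*m)) * (-1) ^ m * N ^ m * r ^ (k - 2*m)))"

end

theory Submission imports Defs begin

lemma sum_even_odd_split:
  fixes f :: "nat \<Rightarrow> 'a::comm_monoid_add"
  shows "(\<Sum>j<2*n. f j) = (\<Sum>m<n. f (2*m)) + (\<Sum>m<n. f (2*m+1))"
  by (induction n) (simp_all add: ac_simps)

lemma binom_split:
  fixes r y N :: "'a::comm_ring_1"
  assumes y2: "y^2 = - N"
  shows "(r + y)^k = (\<Sum>m=0..k div 2. of_nat (k choose (2*m)) * (-1)^m * N^m * r^(k-2*m))
     + (\<Sum>m=0..(k-1) div 2. of_nat (k choose (2*m+1)) * (-1)^m * N^m * r^(k-2*m-1)) * y"
proof -
  define F where "F j = of_nat (k choose j) * y^j * r^(k-j)" for j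
  have F0: "F j = 0" if "k < j" for j using that by (simp add: F_def binomial_eq_0)
  have ye: "y^(2*m) = (-1)^m * N^m" for m
    unfolding power_mult y2 by (rule power_minus)
  have "(r+y)^k = (\<Sum>j\<le>k. F j)"
    unfolding F_def by (subst add.commute) (rule binomial_ring)
  also have "\<dots> = (\<Sum>j<2*(k+1). F j)"
    by (rule sum.mono_neutral_left) (simp, force, simp add: F0)
  also have "\<dots> = (\<Sum>m<k+1. F (2*m)) + (\<Sum>m<k+1. F (2*m+1))"
    by (rule sum_even_odd_split)
  also have "(\<Sum>m<k+1. F (2*m)) = (\<Sum>m=0..k div 2. F (2*m))"
  proof (rule sum.mono_neutral_right)
    show "\<forall>i\<in>{..<k + 1} - {0..k div 2}. F (2 * i) = 0"
    proof
      fix i assume "i \<in> {..<k + 1} - {0..k div 2}"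
      then have "k < 2*i" by auto
      then show "F (2*i) = 0" by (rule F0)
    qed
  qed (simp, use div_le_dividend[of k 2] in auto)
  also have "(\<Sum>m<k+1. F (2*m+1)) = (\<Sum>m=0..(k-1) div 2. F (2*m+1))"
  proof (rule sum.mono_neutral_right)
    show "\<forall>i\<in>{..<k + 1} - {0..(k-1) div 2}. F (2 * i+1) = 0"
    proof
      fix i assume "i \<in> {..<k + 1} - {0..(k-1) div 2}"
      then have "k < 2*i+1" by auto
      then show "F (2*i+1) = 0" by (rule F0)
    qed
  qed (simp, use div_le_dividend[of "k-1" 2] in auto)
  also have "(\<Sum>m=0..k div 2. F (2*m)) = (\<Sum>m=0..k div 2. of_nat (k choose (2*m)) * (-1)^m * N^m * r^(k-2*m))"
    by (rule sum.cong) (simp_all add: F_def ye)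
  also have "(\<Sum>m=0..(k-1) div 2. F (2*m+1)) = (\<Sum>m=0..(k-1) div 2. of_nat (k choose (2*m+1)) * (-1)^m * N^m * r^(k-2*m-1)) * y"
    unfolding sum_distrib_right
  proof (rule sum.cong)
    fix m
    have "F (2*m+1) = of_nat (k choose (2*m+1)) * (y^(2*m) * y) * r^(k-(2*m+1))"
      unfolding F_def power_add power_one_right ..
    also have "\<dots> = of_nat (k choose (2*m+1)) * ((-1)^m * N^m * y) * r^(k-(2*m+1))"
      unfolding ye ..
    finally show "F (2*m+1) = of_nat (k choose (2*m+1)) * (-1)^m * N^m * r^(k-2*m-1) * y"
      by (simp add: mult_ac)
  qed simp
  finally show ?thesis .
qed


definition Ak :: "real \<Rightarrow> real \<Rightarrow> nat \<Rightarrow> real" where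
  "Ak \<rho> \<sigma> k = (\<Sum>m=0..k div 2. real (k choose (2*m)) * (-1)^m * \<sigma>^m * \<rho>^(k-2*m))"
definition Bk :: "real \<Rightarrow> real \<Rightarrow> nat \<Rightarrow> real" where
  "Bk \<rho> \<sigma> k = (\<Sum>m=0..(k-1) div 2. real (k choose (2*m+1)) * (-1)^m * \<sigma>^m * \<rho>^(k-2*m-1))"

lemma inner_A: "(\<Sum>m=0..k div 2. of_nat (k choose (2*m)) * (-1)^m * (of_real \<sigma>)^m * (of_real \<rho>)^(k-2*m))
   = (of_real (Ak \<rho> \<sigma> k) :: 'a::real_algebra_1)"
  by (simp add: Ak_def)

lemma inner_B: "(\<Sum>m=0..(k-1) div 2. of_nat (k choose (2*m+1)) * (-1)^m * (of_real \<sigma>)^m * (of_real \<rho>)^(k-2*m-1))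
   = (of_real (Bk \<rho> \<sigma> k) :: 'a::real_algebra_1)"
  by (simp add: Bk_def)

lemma cpow: "(complex_of_real \<rho> + \<i> * of_real s)^k = of_real (Ak \<rho> (s^2) k) + of_real (Bk \<rho> (s^2) k) * (\<i> * of_real s)"
proof -
  have "(\<i> * complex_of_real s)^2 = - of_real (s^2)" by (simp add: power_mult_distrib)
  from binom_split[OF this, of "of_real \<rho>" k] show ?thesis
    by (simp only: inner_A inner_B)
qed

lemma recs:
  assumes "s > 0"
  shows "Ak \<rho> (s^2) (Suc k) = \<rho> * Ak \<rho> (s^2) k - s^2 * Bk \<rho> (s^2) k"
    and "Bk \<rho> (s^2) (Suc k) = Ak \<rho> (s^2) k + \<rho> * Bk \<rho> (s^2) k"
proof -
  define A where "A = Ak \<rho> (s^2) k"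
  define B where "B = Bk \<rho> (s^2) k"
  have "of_real (Ak \<rho> (s^2) (Suc k)) + of_real (Bk \<rho> (s^2) (Suc k)) * (\<i> * of_real s)
      = (complex_of_real \<rho> + \<i> * of_real s) * (of_real A + of_real B * (\<i> * of_real s))"
    using cpow[of \<rho> s "Suc k"] cpow[of \<rho> s k] by (simp add: A_def B_def)
  then have e: "of_real (Ak \<rho> (s^2) (Suc k)) + \<i> * of_real (s * Bk \<rho> (s^2) (Suc k))
      = complex_of_real (\<rho> * A - s^2 * B) + \<i> * of_real (s * (A + \<rho> * B))"
    by (simp add: algebra_simps power2_eq_square)
  have e1: "Ak \<rho> (s^2) (Suc k) = \<rho> * A - s^2 * B"
    using arg_cong[OF e, of Re] by simp
  have "s * Bk \<rho> (s^2) (Suc k) = s * (A + \<rho> * B)"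
    using arg_cong[OF e, of Im] by simp
  with assms have e2: "Bk \<rho> (s^2) (Suc k) = A + \<rho> * B" by simp
  show "Ak \<rho> (s^2) (Suc k) = \<rho> * Ak \<rho> (s^2) k - s^2 * Bk \<rho> (s^2) k" using e1 by (simp add: A_def B_def)
  show "Bk \<rho> (s^2) (Suc k) = Ak \<rho> (s^2) k + \<rho> * Bk \<rho> (s^2) k" using e2 by (simp add: A_def B_def)
qed

lemma Ak_zero: "Ak \<rho> 0 k = \<rho>^k"
proof -
  have "Ak \<rho> 0 k = (\<Sum>m\<in>{0}. real (k choose (2*m)) * (-1)^m * 0^m * \<rho>^(k-2*m))"
    unfolding Ak_def by (rule sum.mono_neutral_right) auto
  then show ?thesis by simp
qed

lemma of_real_comm: "x * of_real r = of_real r * (x::'a::real_algebra_1)"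
  by (simp add: of_real_def)

lemma step_lemma:
  fixes x :: "'a::real_algebra_1"
  assumes xx: "x * x = - of_real q"
  shows "(of_real p + x) * (of_real a + of_real b * x) = of_real (p*a - q*b) + of_real (a + p*b) * x"
proof -
  have xx': "x * x = - (q *\<^sub>R 1)" using xx by (simp add: of_real_def)
  have "(of_real p + x) * (of_real a + of_real b * x) = (p*a) *\<^sub>R 1 + (p*b) *\<^sub>R x + a *\<^sub>R x + b *\<^sub>R (x * x)"
    by (simp add: of_real_def distrib_left distrib_right algebra_simps)
  also have "\<dots> = of_real (p*a - q*b) + of_real (a + p*b) * x"
    unfolding xx' by (simp add: of_real_def algebra_simps)
  finally show ?thesis .
qed

lemma qpow:
  fixes x :: "'a::real_algebra_1"
  assumes x2: "x^2 = of_real (- \<sigma>)" and "\<sigma> \<ge> 0" and z: "\<sigma> = 0 \<Longrightarrow> x = 0"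
  shows "(of_real \<rho> + x)^k = of_real (Ak \<rho> \<sigma> k) + of_real (Bk \<rho> \<sigma> k) * x"
proof (cases "\<sigma> = 0")
  case True
  then show ?thesis using z by (simp add: Ak_zero)
next
  case False
  define s where "s = sqrt \<sigma>"
  have s: "s > 0" "\<sigma> = s^2" using False assms(2) by (auto simp: s_def)
  show ?thesis unfolding s(2)
  proof (induction k)
    case 0
    then show ?case by (simp add: Ak_def Bk_def)
  next
    case (Suc k)
    have xx: "x * x = - of_real (s^2)" using x2 s(2) by (simp only: power2_eq_square of_real_minus)
    have "(of_real \<rho> + x)^Suc k = (of_real \<rho> + x) * (of_real (Ak \<rho> (s^2) k) + of_real (Bk \<rho> (s^2) k) * x)"
      using Suc.IH by (simp only: power_Suc)
    also have "\<dots> = of_real (\<rho> * Ak \<rho> (s^2) k - s^2 * Bk \<rho> (s^2) k) + of_real (Ak \<rho> (s^2) k + \<rho> * Bk \<rho> (s^2) k) * x"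
      by (rule step_lemma[OF xx])
    also have "\<dots> = of_real (Ak \<rho> (s^2) (Suc k)) + of_real (Bk \<rho> (s^2) (Suc k)) * x"
      by (simp only: recs[OF s(1)])
    finally show ?case .
  qed
qed



lemma quat_of_real_comp [simp]:
  "qRe (of_real t) = t" "qI (of_real t) = 0" "qJ (of_real t) = 0" "qK (of_real t) = 0"
  by (simp_all add: of_real_def scaleR_quat_def one_quat_def)

lemma quat_comp_simps [simp]:
  "qRe (x + y) = qRe x + qRe y" "qI (x + y) = qI x + qI y" "qJ (x + y) = qJ x + qJ y" "qK (x + y) = qK x + qK y"
  "qRe (x - y) = qRe x - qRe y" "qI (x - y) = qI x - qI y" "qJ (x - y) = qJ x - qJ y" "qK (x - y) = qK x - qK y"
  "qRe (0::quat) = 0" "qI (0::quat) = 0" "qJ (0::quat) = 0" "qK (0::quat) = 0"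
  "qRe (1::quat) = 1" "qI (1::quat) = 0" "qJ (1::quat) = 0" "qK (1::quat) = 0"
  by (simp_all add: plus_quat_def minus_quat_def zero_quat_def one_quat_def)

lemma quat_uminus_comp [simp]:
  "qRe (- x) = - qRe x" "qI (- x) = - qI x" "qJ (- x) = - qJ x" "qK (- x) = - qK x"
  by (simp_all add: uminus_quat_def)

lemma quat_mult_comp:
  "qRe (x * y) = qRe x * qRe y - qI x * qI y - qJ x * qJ y - qK x * qK y"
  "qI (x * y) = qRe x * qI y + qI x * qRe y + qJ x * qK y - qK x * qJ y"
  "qJ (x * y) = qRe x * qJ y - qI x * qK y + qJ x * qRe y + qK x * qI y"
  "qK (x * y) = qRe x * qK y + qI x * qJ y - qJ x * qI y + qK x * qRe y"
  by (simp_all add: times_quat_def)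

lemma quat_zero_iff: "(q::quat) = 0 \<longleftrightarrow> (qRe q)^2 + (qI q)^2 + (qJ q)^2 + (qK q)^2 = 0"
proof
  assume "q = 0" then show "(qRe q)^2 + (qI q)^2 + (qJ q)^2 + (qK q)^2 = 0" by simp
next
  assume h: "(qRe q)^2 + (qI q)^2 + (qJ q)^2 + (qK q)^2 = 0"
  have "qRe q = 0" "qI q = 0" "qJ q = 0" "qK q = 0"
    using h by (smt (verit) zero_le_power2 power2_eq_square mult_eq_0_iff)+
  then show "q = 0" by (intro quat_eqI) simp_all
qed

lemma qcnj_mult: "qcnj g * g = of_real ((qRe g)^2 + (qI g)^2 + (qJ g)^2 + (qK g)^2)"
  by (intro quat_eqI) (simp_all add: quat_mult_comp qcnj_def power2_eq_square)

lemma qcnj_mult2: "g * qcnj g = of_real ((qRe g)^2 + (qI g)^2 + (qJ g)^2 + (qK g)^2)"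
  by (intro quat_eqI) (simp_all add: quat_mult_comp qcnj_def power2_eq_square)

lemma inv_eq: "inverse g = of_real (1 / ((qRe g)^2 + (qI g)^2 + (qJ g)^2 + (qK g)^2)) * qcnj g"
  by (intro quat_eqI) (simp_all add: quat_mult_comp qcnj_def inverse_quat_def Let_def
      del: of_real_divide of_real_add of_real_power)

lemma quat_inv:
  assumes "(g::quat) \<noteq> 0"
  shows "inverse g * g = 1" "g * inverse g = 1"
proof -
  define d where "d = (qRe g)^2 + (qI g)^2 + (qJ g)^2 + (qK g)^2"
  have d: "d \<noteq> 0" using assms quat_zero_iff[of g] unfolding d_def by simp
  have i: "inverse g = of_real (1/d) * qcnj g" unfolding d_def by (rule inv_eq)
  have c1: "qcnj g * g = of_real d" unfolding d_def by (rule qcnj_mult)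
  have c2: "g * qcnj g = of_real d" unfolding d_def by (rule qcnj_mult2)
  have e: "of_real (1/d) * of_real d = (1::quat)" using d by (simp flip: of_real_mult)
  have "inverse g * g = of_real (1/d) * (qcnj g * g)"
    unfolding i by (simp only: mult.assoc)
  then show "inverse g * g = 1" unfolding c1 e .
  have "g * inverse g = (g * of_real (1/d)) * qcnj g"
    unfolding i by (simp only: mult.assoc)
  also have "\<dots> = of_real (1/d) * (g * qcnj g)" by (simp only: of_real_comm mult.assoc)
  finally show "g * inverse g = 1" unfolding c2 e .
qed

lemma qcnj_add: "qcnj (a + b) = qcnj a + qcnj b"
  by (intro quat_eqI) (simp_all add: qcnj_def)

lemma qcnj_zero: "qcnj 0 = 0"
  by (intro quat_eqI) (simp_all add: qcnj_def)

lemma qcnj_mult_real: "qcnj (a * of_real t) = qcnj a * of_real t"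
  by (intro quat_eqI) (simp_all add: qcnj_def quat_mult_comp)

lemma qcnj_sum: "qcnj (sum f A) = (\<Sum>k\<in>A. qcnj (f k))"
  using sum_comp_morphism[of qcnj f A, OF qcnj_zero qcnj_add] by (simp add: o_def)

lemma qIm_sq: "(qIm z)^2 = of_real (- ((qI z)^2 + (qJ z)^2 + (qK z)^2))"
  by (intro quat_eqI) (simp_all add: power2_eq_square quat_mult_comp qIm_def del: of_real_minus of_real_add of_real_mult of_real_power)

lemma qIm_zero: "(qI z)^2 + (qJ z)^2 + (qK z)^2 = 0 \<Longrightarrow> qIm z = 0"
  by (subst quat_zero_iff) (simp add: qIm_def)

lemma key_id: "(g * x) * qcnj g * (g * x) = g * qcnj g * g * (x * (x::quat))"
proof -
  define d where "d = (qRe g)^2 + (qI g)^2 + (qJ g)^2 + (qK g)^2"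
  have "(g * x) * qcnj g * (g * x) = g * x * (qcnj g * g) * x" by (simp add: mult.assoc)
  also have "\<dots> = g * (qcnj g * g) * (x * x)" unfolding qcnj_mult d_def[symmetric]
    by (simp add: mult.assoc of_real_comm del: of_real_add of_real_power)
  finally show ?thesis by (simp add: mult.assoc)
qed



theorem mainTheorem17:
  fixes a :: "nat \<Rightarrow> quat" and n :: nat and z0 :: quat
  assumes "n \<ge> 1" and "a 0 \<noteq> 0"
  defines "c \<equiv> coeffs1 a n"
  defines "g \<equiv> gpoly c n" and "gbar \<equiv> gpoly (qcnj \<circ> c) n" and "h \<equiv> hpoly c n"
  defines "r0 \<equiv> of_real (qRe z0)" and "x0 \<equiv> qIm z0" and "N0 \<equiv> - (qIm z0 ^ 2)"
  shows "fpoly a n z0 = 0 \<longleftrightarrow>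
    ((g r0 N0 = 0 \<and> h r0 N0 = 0) \<or>
     (g r0 N0 \<noteq> 0 \<and>
      - (g r0 N0 * gbar r0 N0 * g r0 N0 * N0) = h r0 N0 * gbar r0 N0 * h r0 N0 \<and>
      x0 = - (inverse (g r0 N0) * h r0 N0)))"
proof -
  define \<rho> where "\<rho> = qRe z0"
  define \<sigma> where "\<sigma> = (qI z0)^2 + (qJ z0)^2 + (qK z0)^2"
  have N0: "N0 = of_real \<sigma>" unfolding N0_def \<sigma>_def qIm_sq by simp
  have r0: "r0 = of_real \<rho>" by (simp add: r0_def \<rho>_def)
  have z0: "z0 = of_real \<rho> + x0" by (simp add: x0_def qIm_def \<rho>_def)
  have pw: "z0^k = of_real (Ak \<rho> \<sigma> k) + of_real (Bk \<rho> \<sigma> k) * x0" for k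
  proof -
    have s0: "\<sigma> \<ge> 0" unfolding \<sigma>_def by simp
    have h1: "x0^2 = of_real (- \<sigma>)" unfolding x0_def \<sigma>_def by (rule qIm_sq)
    have h2: "\<sigma> = 0 \<Longrightarrow> x0 = 0" unfolding x0_def \<sigma>_def by (rule qIm_zero)
    show ?thesis unfolding z0 by (rule qpow[OF h1 s0 h2])
  qed
  define G where "G = (\<Sum>k\<le>n. c k * of_real (Bk \<rho> \<sigma> k))"
  define H where "H = (\<Sum>k\<le>n. c k * of_real (Ak \<rho> \<sigma> k))"
  have B0: "Bk \<rho> \<sigma> 0 = 0" by (simp add: Bk_def)
  have A0: "Ak \<rho> \<sigma> 0 = 1" by (simp add: Ak_def)
  have split0: "(\<Sum>k\<le>n. F k) = F 0 + (\<Sum>k=1..n. F k)" for F :: "nat \<Rightarrow> quat"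
    by (simp add: atMost_atLeast0 sum.atLeast_Suc_atMost)
  have gG: "g r0 N0 = G"
    unfolding g_def gpoly_def G_def split0 r0 N0 inner_B by (simp add: B0)
  have hH: "h r0 N0 = H"
    unfolding h_def hpoly_def H_def split0 r0 N0 inner_A by (simp add: A0)
  have gb: "gbar r0 N0 = qcnj G"
    unfolding gbar_def gpoly_def G_def split0 r0 N0 inner_B
    by (simp add: B0 qcnj_zero qcnj_add qcnj_sum qcnj_mult_real)
  have f: "fpoly a n z0 = H + G * x0"
  proof -
    have "fpoly a n z0 = (\<Sum>k\<le>n. c k * z0^k)"
      by (simp add: fpoly_def c_def coeffs1_def lessThan_Suc_atMost[symmetric] add.commute)
    also have "\<dots> = H + G * x0"
      by (simp add: pw H_def G_def sum_distrib_right distrib_left sum.distrib mult.assoc)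
    finally show ?thesis .
  qed
  show ?thesis
  proof (cases "G = 0")
    case True
    then show ?thesis by (simp add: gG hH gb f)
  next
    case False
    note iv = quat_inv[OF False]
    have eq: "H + G * x0 = 0 \<longleftrightarrow> x0 = - (inverse G * H)"
    proof
      assume "H + G * x0 = 0"
      then have "H = - (G * x0)" by (simp add: eq_neg_iff_add_eq_0 add.commute)
      then show "x0 = - (inverse G * H)" by (simp add: mult.assoc[symmetric] iv)
    next
      assume "x0 = - (inverse G * H)"
      then show "H + G * x0 = 0" by (simp add: mult.assoc[symmetric] iv)
    qed
    have cond: "- (G * qcnj G * G * N0) = H * qcnj G * H" if "H + G * x0 = 0"
    proof -
      have "H = - (G * x0)" using that by (simp add: eq_neg_iff_add_eq_0 add.commute)
      then have "H * qcnj G * H = G * qcnj G * G * (x0 * x0)" by (simp add: key_id)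
      then show ?thesis by (simp add: N0_def x0_def power2_eq_square)
    qed
    show ?thesis unfolding gG hH gb f using False eq cond by auto
  qed
qed


end
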